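(* Let $\Lambda$ be a group. For all $w,w'\in\mathcal{A}^1_\Lambda$: (i) $d_\ast(w\,\overline{\ast}\,w')=d_\ast(w)\ast d_\ast(w')$; (i)$'$ $d_\ast^{-1}(w\ast w')=d_\ast^{-1}(w)\,\overline{\ast}\,d_\ast^{-1}(w')$; (ii) $d_\ast(w\,\dot{\overline{\ast}}\,w')=d_\ast(w)\,\dot{\ast}\,d_\ast(w')$; (ii)$'$ $d_\ast^{-1}(w\,\dot\ast\,w')=d_\ast^{-1}(w)\,\dot{\overline{\ast}}\,d_\ast^{-1}(w')$.
   Context: $\mathcal{A}_\Lambda=\mathbb{Q}\langle x,y_s\mid s\in\Lambda\rangle$, $\mathcal{A}^1_\Lambda=\mathbb{Q}+\sum_s\mathcal{A}_\Lambda y_s$, $z_{k,s}=x^{k-1}y_s$. $\gamma$ is the algebra automorphism with $\gamma(x)=x$, $\gamma(y_s)=x+y_s$; $d_{\mathrm{sh}}$ is the $\mathbb{Q}$-linear map on $\mathcal{A}^1_\Lambda$ with $d_{\mathrm{sh}}(1)=1$ and $d_{\mathrm{sh}}(uy_s)=\gamma(u)y_s$. $\mathcal{I}$, $\mathcal{I}^{-1}$ are the $\mathbb{Q}$-linear maps with $\mathcal{I}(1)=\mathcal{I}^{-1}(1)=1$, $\mathcal{I}(z_{k_1,s_1}\cdots z_{k_n,s_n})=z_{k_1,s_1}z_{k_2,s_1s_2}\cdots z_{k_n,s_1\cdots s_n}$, $\mathcal{I}^{-1}(z_{k_1,s_1}\cdots z_{k_n,s_n})=z_{k_1,s_1}z_{k_2,s_2/s_1}\cdots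 z_{k_n,s_n/s_{n-1}}$. $d_\ast=\mathcal{I}^{-1}d_{\mathrm{sh}}\mathcal{I}$ (a bijection of $\mathcal{A}^1_\Lambda$). All four products are $\mathbb{Q}$-bilinear on $\mathcal{A}^1_\Lambda$ with $1$ as unit, and for words $w,w'$: $z_{k,s}w\ast z_{l,t}w'=z_{k,s}(w\ast z_{l,t}w')+z_{l,t}(z_{k,s}w\ast w')+z_{k+l,st}(w\ast w')$; $z_{k,s}w\,\overline\ast\,z_{l,t}w'=z_{k,s}(w\,\overline\ast\,z_{l,t}w')+z_{l,t}(z_{k,s}w\,\overline\ast\,w')-z_{k+l,st}(w\,\overline\ast\,w')$; $z_{k,s}w\,\dot\ast\,z_{l,t}w'=z_{k+l,st}(w\ast w')$; $z_{k,s}w\,\dot{\overline\ast}\,z_{l,t}w'=z_{k+l,st}(w\,\overline\ast\,w')$. *)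

theory Defs
  imports Complex_Main
begin

text \<open>The free algebra A_Lambda = Q<x, y_s | s in Lambda>.  Words are lists of letters;
  an element of A_Lambda is a finitely supported function from words to rat.
  The (abelian) group Lambda is written additively: st is s + t, t/s is t - s.\<close>

datatype 'g letter = X | Y 'g

type_synonym 'g word = "'g letter list"
type_synonym 'g poly = "'g word \<Rightarrow> rat"

text \<open>z-words: z_{k,s} is encoded as the pair (k, s), k >= 1.\<close>
type_synonym 'g zword = "(nat \<times> 'g) list"

definition wd :: "'a \<Rightarrow> 'a \<Rightarrow> rat" where
  "wd u = (\<lambda>v. if v = u then 1 else 0)"

definition lin :: "('a \<Rightarrow> 'b \<Rightarrow> rat) \<Rightarrow> ('a \<Rightarrow> rat) \<Rightarrow> 'b \<Rightarrow> rat" where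
  "lin f P = (\<lambda>v. \<Sum>u\<in>{u. P u \<noteq> 0}. P u * f u v)"

definition bil :: "('a \<Rightarrow> 'a \<Rightarrow> 'b \<Rightarrow> rat) \<Rightarrow> ('a \<Rightarrow> rat) \<Rightarrow> ('a \<Rightarrow> rat) \<Rightarrow> 'b \<Rightarrow> rat" where
  "bil f P Q = (\<lambda>v. \<Sum>u\<in>{u. P u \<noteq> 0}. \<Sum>u'\<in>{u'. Q u' \<noteq> 0}. P u * Q u' * f u u' v)"

text \<open>The subspace A^1_Lambda = Q + sum_s A_Lambda y_s.\<close>
definition A1 :: "'g poly set" where
  "A1 = {P. finite {u. P u \<noteq> 0} \<and> (\<forall>u. P u \<noteq> 0 \<longrightarrow> u = [] \<or> (\<exists>s. last u = Y s))}"

definition toW :: "'g zword \<Rightarrow> 'g word" where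
  "toW w = concat (map (\<lambda>(k, s). replicate (k - 1) X @ [Y s]) w)"

fun parse :: "nat \<Rightarrow> 'g word \<Rightarrow> 'g zword" where
  "parse k [] = []"
| "parse k (X # u) = parse (Suc k) u"
| "parse k (Y s # u) = (k, s) # parse 1 u"

definition liftZ :: "('g zword \<Rightarrow> rat) \<Rightarrow> 'g poly" where
  "liftZ R = (\<lambda>w. if w = [] \<or> (\<exists>s. last w = Y s) then R (parse 1 w) else 0)"

definition cons_poly :: "'a \<Rightarrow> ('a list \<Rightarrow> rat) \<Rightarrow> 'a list \<Rightarrow> rat" where
  "cons_poly a P = (\<lambda>u. case u of [] \<Rightarrow> 0 | b # u' \<Rightarrow> if b = a then P u' else 0)"

text \<open>Harmonic-type products on z-words; c = 1 gives the stuffle product,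
  c = -1 gives the product with the minus sign.\<close>
fun zprod :: "rat \<Rightarrow> ('g::ab_group_add) zword \<Rightarrow> 'g zword \<Rightarrow> 'g zword \<Rightarrow> rat" where
  "zprod c [] v = wd v"
| "zprod c ((k, s) # w) [] = wd ((k, s) # w)"
| "zprod c ((k, s) # w) ((l, t) # v) =
     (\<lambda>u. cons_poly (k, s) (zprod c w ((l, t) # v)) u
        + cons_poly (l, t) (zprod c ((k, s) # w) v) u
        + c * cons_poly (k + l, s + t) (zprod c w v) u)"

fun zdot :: "rat \<Rightarrow> ('g::ab_group_add) zword \<Rightarrow> 'g zword \<Rightarrow> 'g zword \<Rightarrow> rat" where
  "zdot c [] v = wd v"
| "zdot c ((k, s) # w) [] = wd ((k, s) # w)"
| "zdot c ((k, s) # w) ((l, t) # v) = cons_poly (k + l, s + t) (zprod c w v)"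

definition stuffle :: "('g::ab_group_add) poly \<Rightarrow> 'g poly \<Rightarrow> 'g poly" where
  "stuffle = bil (\<lambda>u v. liftZ (zprod 1 (parse 1 u) (parse 1 v)))"

definition stuffle_bar :: "('g::ab_group_add) poly \<Rightarrow> 'g poly \<Rightarrow> 'g poly" where
  "stuffle_bar = bil (\<lambda>u v. liftZ (zprod (-1) (parse 1 u) (parse 1 v)))"

definition stuffle_dot :: "('g::ab_group_add) poly \<Rightarrow> 'g poly \<Rightarrow> 'g poly" where
  "stuffle_dot = bil (\<lambda>u v. liftZ (zdot 1 (parse 1 u) (parse 1 v)))"

definition stuffle_bar_dot :: "('g::ab_group_add) poly \<Rightarrow> 'g poly \<Rightarrow> 'g poly" where
  "stuffle_bar_dot = bil (\<lambda>u v. liftZ (zdot (-1) (parse 1 u) (parse 1 v)))"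

text \<open>gamma on words: the algebra automorphism x -> x, y_s -> x + y_s.\<close>
fun gamma :: "'g word \<Rightarrow> 'g poly" where
  "gamma [] = wd []"
| "gamma (X # u) = cons_poly X (gamma u)"
| "gamma (Y s # u) = (\<lambda>v. cons_poly X (gamma u) v + cons_poly (Y s) (gamma u) v)"

definition snoc_poly :: "'g letter \<Rightarrow> 'g poly \<Rightarrow> 'g poly" where
  "snoc_poly a P = (\<lambda>v. if v \<noteq> [] \<and> last v = a then P (butlast v) else 0)"

definition dsh_word :: "'g word \<Rightarrow> 'g poly" where
  "dsh_word u = (if u = [] then wd []
                 else case last u of X \<Rightarrow> (\<lambda>_. 0) | Y s \<Rightarrow> snoc_poly (Y s) (gamma (butlast u)))"

definition dsh :: "'g poly \<Rightarrow> 'g poly" where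
  "dsh = lin dsh_word"

fun Iz_aux :: "('g::ab_group_add) \<Rightarrow> 'g zword \<Rightarrow> 'g zword" where
  "Iz_aux p [] = []"
| "Iz_aux p ((k, s) # w) = (k, p + s) # Iz_aux (p + s) w"

fun Iinvz_aux :: "('g::ab_group_add) \<Rightarrow> 'g zword \<Rightarrow> 'g zword" where
  "Iinvz_aux p [] = []"
| "Iinvz_aux p ((k, s) # w) = (k, s - p) # Iinvz_aux s w"

definition Imap :: "('g::ab_group_add) poly \<Rightarrow> 'g poly" where
  "Imap = lin (\<lambda>u. wd (toW (Iz_aux 0 (parse 1 u))))"

definition Iinv :: "('g::ab_group_add) poly \<Rightarrow> 'g poly" where
  "Iinv = lin (\<lambda>u. wd (toW (Iinvz_aux 0 (parse 1 u))))"

definition dstar :: "('g::ab_group_add) poly \<Rightarrow> 'g poly" where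
  "dstar P = Iinv (dsh (Imap P))"

definition dstar_inv :: "('g::ab_group_add) poly \<Rightarrow> 'g poly" where
  "dstar_inv = inv_into A1 dstar"

end

theory Submission
  imports Defs "HOL-Library.Function_Algebras"
begin



definition spt :: "('a \<Rightarrow> rat) \<Rightarrow> 'a set" where "spt P = {u. P u \<noteq> 0}"
abbreviation fin :: "('a \<Rightarrow> rat) \<Rightarrow> bool" where "fin P \<equiv> finite (spt P)"

definition smul :: "rat \<Rightarrow> ('a \<Rightarrow> rat) \<Rightarrow> 'a \<Rightarrow> rat" where
  "smul c P = (\<lambda>v. c * P v)"

lemma smul_apply[simp]: "smul c P v = c * P v" by (simp add: smul_def)

lemma spt_wd[simp]: "spt (wd u) = {u}" by (auto simp: spt_def wd_def)
lemma fin_wd[simp]: "fin (wd u)" by simp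
lemma spt_add: "spt (P + Q) \<subseteq> spt P \<union> spt Q" by (auto simp: spt_def)
lemma fin_add[simp]: "fin P \<Longrightarrow> fin Q \<Longrightarrow> fin (P + Q)" by (meson finite_UnI finite_subset spt_add)
lemma fin_uminus[simp]: "fin (- P) = fin P" by (simp add: spt_def)
lemma fin_diff[simp]: "fin P \<Longrightarrow> fin Q \<Longrightarrow> fin (P - Q)"
  using fin_add[of P "- Q"] by simp
lemma fin_smul[simp]: "fin P \<Longrightarrow> fin (smul c P)"
  by (rule finite_subset[of _ "spt P"]) (auto simp: spt_def)
lemma fin_zero[simp]: "fin (0::'a\<Rightarrow>rat)" by (simp add: spt_def)

lemma lin_eq: "finite S \<Longrightarrow> spt P \<subseteq> S \<Longrightarrow> lin f P v = (\<Sum>u\<in>S. P u * f u v)"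
  unfolding lin_def spt_def[symmetric]
  by (rule sum.mono_neutral_left) (auto simp: spt_def)

lemma lin_wd[simp]: "lin f (wd u) = f u"
  by (rule ext, subst lin_eq[of "{u}"]) (auto simp: wd_def spt_def)

lemma lin_zero[simp]: "lin f 0 = 0"
  by (rule ext) (simp add: lin_def)

lemma lin_add: "fin P \<Longrightarrow> fin Q \<Longrightarrow> lin f (P + Q) = lin f P + lin f Q"
  apply (rule ext)
  apply (simp add: lin_eq[of "spt P \<union> spt Q"] spt_add)
  apply (simp add: distrib_right sum.distrib)
  done

lemma lin_smul: "fin P \<Longrightarrow> lin f (smul c P) = smul c (lin f P)"
proof (rule ext)
  fix v assume P: "fin P"
  have "spt (smul c P) \<subseteq> spt P" by (auto simp: spt_def)
  then have "lin f (smul c P) v = (\<Sum>u\<in>spt P. c * P u * f u v)" using P by (simp add: lin_eq)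
  also have "\<dots> = c * (\<Sum>u\<in>spt P. P u * f u v)" by (simp add: sum_distrib_left mult.assoc)
  also have "\<dots> = smul c (lin f P) v" using P by (simp add: lin_eq)
  finally show "lin f (smul c P) v = smul c (lin f P) v" .
qed

lemma lin_uminus: "lin f (- P) = - lin f P"
  by (rule ext) (simp add: lin_def sum_negf)

lemma lin_diff: "fin P \<Longrightarrow> fin Q \<Longrightarrow> lin f (P - Q) = lin f P - lin f Q"
proof -
  assume "fin P" "fin Q"
  then have "lin f (P + (- Q)) = lin f P + lin f (- Q)" by (intro lin_add) auto
  then show ?thesis by (simp add: lin_uminus)
qed

lemma lin_fadd: "lin (\<lambda>u. f u + g u) P = lin f P + lin g P"
  by (rule ext) (simp add: lin_def distrib_left sum.distrib)

lemma lin_cong: "(\<And>u. u \<in> spt P \<Longrightarrow> f u = g u) \<Longrightarrow> lin f P = lin g P"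
  unfolding lin_def spt_def by (rule ext, rule sum.cong) auto

lemma lin_id: "fin P \<Longrightarrow> lin wd P = P"
  apply (rule ext)
  subgoal for v
    apply (subst lin_eq[of "spt P"], simp, simp)
    apply (cases "v \<in> spt P")
     apply (simp add: wd_def if_distrib cong: if_cong)
    apply (simp add: wd_def if_distrib cong: if_cong)
    apply (auto simp: spt_def)
    done
  done

lemma spt_lin: "spt (lin g P) \<subseteq> (\<Union>u\<in>spt P. spt (g u))"
proof
  fix x assume "x \<in> spt (lin g P)"
  then have "(\<Sum>u\<in>{u. P u \<noteq> 0}. P u * g u x) \<noteq> 0" by (simp add: spt_def lin_def)
  then obtain u where "P u \<noteq> 0" "P u * g u x \<noteq> 0"
    by (metis (mono_tags, lifting) mem_Collect_eq sum.neutral)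
  then show "x \<in> (\<Union>u\<in>spt P. spt (g u))" by (auto simp: spt_def)
qed

lemma fin_lin[simp]: "fin P \<Longrightarrow> (\<And>u. u \<in> spt P \<Longrightarrow> fin (g u)) \<Longrightarrow> fin (lin g P)"
  by (rule finite_subset[OF spt_lin]) auto

lemma lin_comp:
  assumes "fin P" "\<And>u. u \<in> spt P \<Longrightarrow> fin (g u)"
  shows "lin f (lin g P) = lin (\<lambda>u. lin f (g u)) P"
proof (rule ext)
  fix v
  let ?T = "\<Union>u\<in>spt P. spt (g u)"
  have T: "finite ?T" using assms by auto
  have "lin f (lin g P) v = (\<Sum>w\<in>?T. lin g P w * f w v)"
    by (rule lin_eq[OF T spt_lin])
  also have "\<dots> = (\<Sum>w\<in>?T. (\<Sum>u\<in>spt P. P u * g u w) * f w v)"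
    by (simp add: lin_def spt_def)
  also have "\<dots> = (\<Sum>u\<in>spt P. P u * (\<Sum>w\<in>?T. g u w * f w v))"
  proof -
    have "(\<Sum>w\<in>?T. (\<Sum>u\<in>spt P. P u * g u w) * f w v) = (\<Sum>w\<in>?T. \<Sum>u\<in>spt P. P u * g u w * f w v)"
      by (simp add: sum_distrib_right)
    also have "\<dots> = (\<Sum>u\<in>spt P. \<Sum>w\<in>?T. P u * g u w * f w v)" by (rule sum.swap)
    also have "\<dots> = (\<Sum>u\<in>spt P. P u * (\<Sum>w\<in>?T. g u w * f w v))" by (simp add: sum_distrib_left mult.assoc)
    finally show ?thesis .
  qed
  also have "\<dots> = (\<Sum>u\<in>spt P. P u * lin f (g u) v)"
    apply (rule sum.cong, simp)
    apply (subst lin_eq[of ?T], use T in auto)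
    done
  also have "\<dots> = lin (\<lambda>u. lin f (g u)) P v" by (simp add: lin_def spt_def)
  finally show "lin f (lin g P) v = lin (\<lambda>u. lin f (g u)) P v" .
qed

lemma lin_swap: "lin (\<lambda>x. lin (g x) Q) P = lin (\<lambda>y. lin (\<lambda>x. g x y) P) Q"
proof (rule ext)
  fix v
  have "lin (\<lambda>x. lin (g x) Q) P v = (\<Sum>x\<in>spt P. \<Sum>y\<in>spt Q. P x * Q y * g x y v)"
    by (simp add: lin_def spt_def sum_distrib_left mult.assoc)
  also have "\<dots> = (\<Sum>y\<in>spt Q. \<Sum>x\<in>spt P. P x * Q y * g x y v)" by (rule sum.swap)
  also have "\<dots> = lin (\<lambda>y. lin (\<lambda>x. g x y) P) Q v"
    by (simp add: lin_def spt_def sum_distrib_left mult_ac)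
  finally show "lin (\<lambda>x. lin (g x) Q) P v = lin (\<lambda>y. lin (\<lambda>x. g x y) P) Q v" .
qed

definition lmap :: "(('a \<Rightarrow> rat) \<Rightarrow> ('b \<Rightarrow> rat)) \<Rightarrow> bool" where
  "lmap F \<longleftrightarrow> (\<forall>P. fin P \<longrightarrow> F P = lin (\<lambda>x. F (wd x)) P)"
definition fmap :: "(('a \<Rightarrow> rat) \<Rightarrow> ('b \<Rightarrow> rat)) \<Rightarrow> bool" where
  "fmap F \<longleftrightarrow> (\<forall>P. fin P \<longrightarrow> fin (F P))"

lemma lmapD: "lmap F \<Longrightarrow> fin P \<Longrightarrow> F P = lin (\<lambda>x. F (wd x)) P" unfolding lmap_def by blast
lemma fmapD: "fmap F \<Longrightarrow> fin P \<Longrightarrow> fin (F P)" by (simp add: fmap_def)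

lemma lmap_lin[intro]: "lmap (lin g)" by (simp add: lmap_def)
lemma lmap_id[intro]: "lmap (\<lambda>P. P)" by (simp add: lmap_def lin_id)

lemma lmap_lin_F:
  assumes "lmap F" "fin P" "\<And>u. u \<in> spt P \<Longrightarrow> fin (h u)"
  shows "F (lin h P) = lin (\<lambda>u. F (h u)) P"
proof -
  have "F (lin h P) = lin (\<lambda>x. F (wd x)) (lin h P)" by (rule lmapD) (use assms in auto)
  also have "\<dots> = lin (\<lambda>u. lin (\<lambda>x. F (wd x)) (h u)) P" using assms by (simp add: lin_comp)
  also have "\<dots> = lin (\<lambda>u. F (h u)) P" by (rule lin_cong, rule lmapD[symmetric]) (use assms in auto)
  finally show ?thesis .
qed

lemma lmap_comp:
  fixes F :: "('b \<Rightarrow> rat) \<Rightarrow> ('c \<Rightarrow> rat)" and G :: "('a \<Rightarrow> rat) \<Rightarrow> ('b \<Rightarrow> rat)"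
  assumes "lmap F" "lmap G" "fmap G" shows "lmap (\<lambda>P. F (G P))"
  unfolding lmap_def
proof (intro allI impI)
  fix P :: "'a \<Rightarrow> rat" assume P: "fin P"
  have "F (G P) = F (lin (\<lambda>x. G (wd x)) P)" using lmapD[OF assms(2) P] by simp
  also have "\<dots> = lin (\<lambda>x. F (G (wd x))) P"
    using assms P by (intro lmap_lin_F) (auto simp: fmapD)
  finally show "F (G P) = lin (\<lambda>x. F (G (wd x))) P" .
qed

lemma lmap_add[intro]: fixes F :: "('a \<Rightarrow> rat) \<Rightarrow> ('b \<Rightarrow> rat)" assumes "lmap F" "lmap G" shows "lmap (\<lambda>P. F P + G P)"
  unfolding lmap_def proof (intro allI impI)
  fix P :: "'a \<Rightarrow> rat" assume P: "fin P"
  show "F P + G P = lin (\<lambda>x. F (wd x) + G (wd x)) P"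
    by (simp only: lin_fadd lmapD[OF assms(1) P, symmetric] lmapD[OF assms(2) P, symmetric])
qed
lemma lin_fneg: "lin (\<lambda>u. - f u) P = - lin f P"
  by (rule ext) (simp add: lin_def sum_negf)
lemma lmap_uminus[intro]: fixes F :: "('a \<Rightarrow> rat) \<Rightarrow> ('b \<Rightarrow> rat)" assumes "lmap F" shows "lmap (\<lambda>P. - F P)"
  unfolding lmap_def proof (intro allI impI)
  fix P :: "'a \<Rightarrow> rat" assume P: "fin P"
  show "- F P = lin (\<lambda>x. - F (wd x)) P"
    by (simp only: lin_fneg lmapD[OF assms(1) P, symmetric])
qed

lemma lin_fdiff: "lin (\<lambda>u. f u - g u) P = lin f P - lin g P"
  by (rule ext) (simp add: lin_def algebra_simps sum_subtractf)
lemma lmap_diff[intro]: fixes F :: "('a \<Rightarrow> rat) \<Rightarrow> ('b \<Rightarrow> rat)" assumes "lmap F" "lmap G" shows "lmap (\<lambda>P. F P - G P)"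
  unfolding lmap_def proof (intro allI impI)
  fix P :: "'a \<Rightarrow> rat" assume P: "fin P"
  show "F P - G P = lin (\<lambda>x. F (wd x) - G (wd x)) P"
    by (simp only: lin_fdiff lmapD[OF assms(1) P, symmetric] lmapD[OF assms(2) P, symmetric])
qed

lemma lmap_eq:
  assumes "lmap F" "lmap G" "\<And>x. F (wd x) = G (wd x)" "fin P"
  shows "F P = G P"
  using lmapD[OF assms(1) assms(4)] lmapD[OF assms(2) assms(4)] assms(3) by simp

lemma fmap_id[intro]: "fmap (\<lambda>P. P)" by (simp add: fmap_def)
lemma fmap_lin[intro]: "(\<And>x. fin (g x)) \<Longrightarrow> fmap (lin g)" by (simp add: fmap_def)
lemma fmap_comp: "fmap F \<Longrightarrow> fmap G \<Longrightarrow> fmap (\<lambda>P. F (G P))" by (simp add: fmap_def)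
lemma fmap_add[intro]: "fmap F \<Longrightarrow> fmap G \<Longrightarrow> fmap (\<lambda>P. F P + G P)" by (simp add: fmap_def)
lemma fmap_diff[intro]: "fmap F \<Longrightarrow> fmap G \<Longrightarrow> fmap (\<lambda>P. F P - G P)" by (simp add: fmap_def)

lemma bil_unique:
  assumes "\<And>B. fin B \<Longrightarrow> lmap (\<lambda>A. F A B)" "\<And>A. fin A \<Longrightarrow> lmap (F A)"
    "\<And>B. fin B \<Longrightarrow> lmap (\<lambda>A. G A B)" "\<And>A. fin A \<Longrightarrow> lmap (G A)"
    "\<And>x y. F (wd x) (wd y) = G (wd x) (wd y)" "fin PA" "fin PB"
  shows "F PA PB = G PA PB"
proof -
  have "F PA PB = lin (\<lambda>x. F (wd x) PB) PA" using lmapD[OF assms(1)[of PB] assms(6)] assms(7) by simp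
  also have "\<dots> = lin (\<lambda>x. G (wd x) PB) PA"
  proof (rule lin_cong)
    fix u
    show "F (wd u) PB = G (wd u) PB"
      using lmapD[OF assms(2)[OF fin_wd] assms(7)] lmapD[OF assms(4)[OF fin_wd] assms(7)] assms(5) by simp
  qed
  also have "\<dots> = G PA PB" using lmapD[OF assms(3)[of PB] assms(6)] assms(7) by simp
  finally show ?thesis .
qed

lemma lmap_param:
  assumes "\<And>x. lmap (H x)"
  shows "lmap (\<lambda>B. lin (\<lambda>x. H x B) P)"
  unfolding lmap_def
proof (intro allI impI)
  fix B :: "'b \<Rightarrow> rat" assume B: "fin B"
  have "lin (\<lambda>x. H x B) P = lin (\<lambda>x. lin (\<lambda>y. H x (wd y)) B) P"
    by (rule lin_cong, rule lmapD) (use assms B in auto)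
  also have "\<dots> = lin (\<lambda>y. lin (\<lambda>x. H x (wd y)) P) B" by (rule lin_swap)
  finally show "lin (\<lambda>x. H x B) P = lin (\<lambda>y. lin (\<lambda>x. H x (wd y)) P) B" .
qed




definition zadd :: "nat \<times> 'g::ab_group_add \<Rightarrow> nat \<times> 'g \<Rightarrow> nat \<times> 'g" where
  "zadd a b = (fst a + fst b, snd a + snd b)"

lemma zadd_assoc: "zadd (zadd a b) c = zadd a (zadd b c)" by (simp add: zadd_def ac_simps)
lemma zadd_commute: "zadd a b = zadd b a" by (simp add: zadd_def ac_simps)
lemma zadd_left_commute: "zadd a (zadd b c) = zadd b (zadd a c)" by (simp add: zadd_def ac_simps)
lemmas zadd_ac = zadd_assoc zadd_commute zadd_left_commute

fun mw :: "nat \<times> 'g::ab_group_add \<Rightarrow> (nat \<times> 'g) list \<Rightarrow> (nat \<times> 'g) list \<Rightarrow> rat" where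
  "mw a [] = 0"
| "mw a (b # x) = wd (zadd a b # x)"

definition M :: "nat \<times> 'g::ab_group_add \<Rightarrow> ((nat \<times> 'g) list \<Rightarrow> rat) \<Rightarrow> (nat \<times> 'g) list \<Rightarrow> rat" where
  "M a = lin (mw a)"

lemma cons_lin: "fin P \<Longrightarrow> cons_poly a P = lin (\<lambda>x. wd (a # x)) P"
proof (rule ext)
  fix v assume P: "fin P"
  have "lin (\<lambda>x. wd (a # x)) P v = (\<Sum>u\<in>spt P. P u * wd (a # u) v)" using P by (simp add: lin_eq)
  also have "\<dots> = cons_poly a P v"
  proof (cases v)
    case Nil then show ?thesis by (simp add: wd_def cons_poly_def)
  next
    case (Cons b v')
    show ?thesis
    proof (cases "b = a \<and> v' \<in> spt P")
      case True
      then show ?thesis using Cons P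
        by (auto simp: wd_def cons_poly_def if_distrib cong: if_cong)
    next
      case False
      then show ?thesis using Cons
        by (auto simp: wd_def cons_poly_def spt_def intro!: sum.neutral)
    qed
  qed
  finally show "cons_poly a P v = lin (\<lambda>x. wd (a # x)) P v" ..
qed

lemma cons_wd[simp]: "cons_poly a (wd x) = wd (a # x)"
  by (simp add: cons_lin)
lemma fin_cons[simp]: "fin P \<Longrightarrow> fin (cons_poly a P)"
  by (simp add: cons_lin)
lemma cons_add[simp]: "cons_poly a (P + Q) = cons_poly a P + cons_poly a Q"
  by (rule ext) (simp add: cons_poly_def split: list.split)
lemma cons_diff[simp]: "cons_poly a (P - Q) = cons_poly a P - cons_poly a Q"
  by (rule ext) (simp add: cons_poly_def split: list.split)
lemma cons_uminus[simp]: "cons_poly a (- P) = - cons_poly a P"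
  by (rule ext) (simp add: cons_poly_def split: list.split)
lemma cons_smul[simp]: "cons_poly a (smul c P) = smul c (cons_poly a P)"
  by (rule ext) (simp add: cons_poly_def split: list.split)
lemma cons_zero[simp]: "cons_poly a 0 = 0"
  by (rule ext) (simp add: cons_poly_def split: list.split)
lemma smul_one[simp]: "smul 1 P = P" by (rule ext) simp
lemma smul_mone[simp]: "smul (-1) P = - P" by (rule ext) simp

lemma lmap_cons0[intro]: "lmap (cons_poly a)"
  by (simp add: lmap_def cons_lin)
lemma fmap_cons0[intro]: "fmap (cons_poly a)" by (simp add: fmap_def)

lemma fin_mw[simp]: "fin (mw a x)" by (cases x) (auto simp del: spt_wd simp: spt_def[symmetric])
lemma fin_M[simp]: "fin P \<Longrightarrow> fin (M a P)" by (simp add: M_def)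
lemma M_wd_nil[simp]: "M a (wd []) = 0" by (simp add: M_def fun_eq_iff)
lemma M_wd_cons[simp]: "M a (wd (b # x)) = wd (zadd a b # x)" by (simp add: M_def)
lemma M_zero[simp]: "M a 0 = 0" by (simp add: M_def)
lemma M_add[simp]: "fin P \<Longrightarrow> fin Q \<Longrightarrow> M a (P + Q) = M a P + M a Q" by (simp add: M_def lin_add)
lemma M_diff[simp]: "fin P \<Longrightarrow> fin Q \<Longrightarrow> M a (P - Q) = M a P - M a Q" by (simp add: M_def lin_diff)
lemma M_uminus[simp]: "M a (- P) = - M a P" by (simp add: M_def lin_uminus)
lemma M_smul[simp]: "fin P \<Longrightarrow> M a (smul c P) = smul c (M a P)" by (simp add: M_def lin_smul)

lemma lin_fsmul: "lin (\<lambda>x. smul c (f x)) P = smul c (lin f P)"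
  by (rule ext) (simp add: lin_def sum_distrib_left mult_ac)
lemma lmap_smul0[intro]: "lmap (smul c)"
  by (simp add: lmap_def lin_fsmul lin_id)

lemma fmap_smul0[intro]: "fmap (smul c)" by (simp add: fmap_def)

lemma lmap_M0[intro]: "lmap (M a)" by (simp add: M_def lmap_lin)
lemma fmap_M0[intro]: "fmap (M a)" by (simp add: fmap_def)

lemma lmap_compF: "lmap G \<Longrightarrow> fmap G \<Longrightarrow> lmap F \<Longrightarrow> lmap (\<lambda>P. F (G P))"
  by (rule lmap_comp)

lemma lmap_cons[intro]: "lmap F \<Longrightarrow> fmap F \<Longrightarrow> lmap (\<lambda>P. cons_poly a (F P))"
  using lmap_comp[OF lmap_cons0] .
lemma fmap_cons[intro]: "fmap F \<Longrightarrow> fmap (\<lambda>P. cons_poly a (F P))"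
  by (simp add: fmap_def)
lemma lmap_M[intro]: "lmap F \<Longrightarrow> fmap F \<Longrightarrow> lmap (\<lambda>P. M a (F P))"
  unfolding M_def using lmap_comp[OF lmap_lin] .
lemma fmap_M[intro]: "fmap F \<Longrightarrow> fmap (\<lambda>P. M a (F P))"
  by (simp add: fmap_def)
lemma lmap_smul[intro]: "lmap F \<Longrightarrow> fmap F \<Longrightarrow> lmap (\<lambda>P. smul c (F P))"
  using lmap_comp[OF lmap_smul0] .
lemma fmap_smul[intro]: "fmap F \<Longrightarrow> fmap (\<lambda>P. smul c (F P))"
  by (simp add: fmap_def)
lemma lmap_linF[intro]: "lmap F \<Longrightarrow> fmap F \<Longrightarrow> lmap (\<lambda>P. lin g (F P))"
  using lmap_comp[OF lmap_lin] .
lemma fmap_linF[intro]: "fmap F \<Longrightarrow> (\<And>x. fin (g x)) \<Longrightarrow> fmap (\<lambda>P. lin g (F P))"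
  by (simp add: fmap_def)
lemma fmap_uminus[intro]: "fmap F \<Longrightarrow> fmap (\<lambda>P. - F P)"
  by (simp add: fmap_def)

lemma M_cons: "fin P \<Longrightarrow> M a (cons_poly b P) = cons_poly (zadd a b) P"
  by (rule lmap_eq[where F="\<lambda>P. M a (cons_poly b P)" and G="cons_poly (zadd a b)"]) auto

lemma M_M: "fin P \<Longrightarrow> M a (M b P) = M (zadd a b) P"
proof (rule lmap_eq[where F="\<lambda>P. M a (M b P)" and G="M (zadd a b)"])
  fix x show "M a (M b (wd x)) = M (zadd a b) (wd x)"
    by (cases x) (auto simp: zadd_assoc)
qed auto

definition bl :: "('a \<Rightarrow> 'b \<Rightarrow> 'c \<Rightarrow> rat) \<Rightarrow> ('a \<Rightarrow> rat) \<Rightarrow> ('b \<Rightarrow> rat) \<Rightarrow> 'c \<Rightarrow> rat" where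
  "bl f A B = lin (\<lambda>x. lin (f x) B) A"

lemma bl_wd: "bl f (wd x) (wd y) = f x y" by (simp add: bl_def)
lemma lmap_bl1: "lmap (\<lambda>A. bl f A B)" by (simp add: bl_def lmap_lin)
lemma lmap_bl2: "lmap (bl f A)" unfolding bl_def by (rule lmap_param) (rule lmap_lin)
lemma fin_bl[simp]: "fin A \<Longrightarrow> fin B \<Longrightarrow> (\<And>x y. fin (f x y)) \<Longrightarrow> fin (bl f A B)"
  by (simp add: bl_def)

lemma lmap_blF1[intro]: "lmap F \<Longrightarrow> fmap F \<Longrightarrow> lmap (\<lambda>P. bl f (F P) B)"
  using lmap_comp[OF lmap_bl1] .
lemma lmap_blF2[intro]: "lmap F \<Longrightarrow> fmap F \<Longrightarrow> lmap (\<lambda>P. bl f A (F P))"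
  using lmap_comp[OF lmap_bl2] .
lemma fmap_blF1[intro]: "fmap F \<Longrightarrow> fin B \<Longrightarrow> (\<And>x y. fin (f x y)) \<Longrightarrow> fmap (\<lambda>P. bl f (F P) B)"
  by (simp add: fmap_def)
lemma fmap_blF2[intro]: "fmap F \<Longrightarrow> fin A \<Longrightarrow> (\<And>x y. fin (f x y)) \<Longrightarrow> fmap (\<lambda>P. bl f A (F P))"
  by (simp add: fmap_def)

lemma bl_add1[simp]: "fin A \<Longrightarrow> fin A' \<Longrightarrow> bl f (A + A') B = bl f A B + bl f A' B"
  by (simp add: bl_def lin_add)
lemma bl_add2[simp]: "fin B \<Longrightarrow> fin B' \<Longrightarrow> bl f A (B + B') = bl f A B + bl f A B'"
  by (simp add: bl_def lin_add lin_fadd)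
lemma bl_zero1[simp]: "bl f 0 B = 0" by (simp add: bl_def)
lemma bl_zero2[simp]: "bl f A 0 = 0" by (rule ext) (simp add: bl_def lin_def)

lemma zprod_cons: "zprod c (a # w) (b # v) = cons_poly a (zprod c w (b # v)) + cons_poly b (zprod c (a # w) v)
   + smul c (cons_poly (zadd a b) (zprod c w v))"
  by (cases a; cases b) (simp add: zadd_def plus_fun_def smul_def)

declare zprod.simps(3)[simp del]

lemma Zp_wd[simp]: "bl (zprod c) (wd x) (wd y) = zprod c x y" by (rule bl_wd)
lemma Zd_wd[simp]: "bl (zdot c) (wd x) (wd y) = zdot c x y" by (rule bl_wd)

lemma zprod_nil2[simp]: "zprod c w [] = wd w" by (cases w) auto

lemma zprod_nil_fun[simp]: "zprod c [] = wd" by (rule ext) simp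
lemma zprod_nil_fun2[simp]: "(\<lambda>x. zprod c x []) = wd" by (rule ext) simp

lemma fin_zprod[simp]: "fin (zprod c w v)"
  apply (induction c w v rule: zprod.induct)
    apply simp
   apply simp
  apply (subst zprod_cons; simp)
  done

lemma zdot_cons: "zdot c (a # w) (b # v) = cons_poly (zadd a b) (zprod c w v)"
  by (cases a; cases b) (simp add: zadd_def)
lemma zdot_nil1[simp]: "zdot c [] v = wd v" by simp
lemma zdot_nil2[simp]: "zdot c w [] = wd w" by (cases w) auto
lemma zdot_nil_fun[simp]: "zdot c [] = wd" by (rule ext) simp
lemma zdot_nil_fun2[simp]: "(\<lambda>x. zdot c x []) = wd" by (rule ext) simp

lemma fin_zdot[simp]: "fin (zdot c w v)"
  by (cases w; cases v) (auto simp: zdot_cons simp del: zdot.simps)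




fun contr :: "rat \<Rightarrow> (nat \<times> 'g::ab_group_add) list \<Rightarrow> (nat \<times> 'g) list \<Rightarrow> rat" where
  "contr c [] = wd []"
| "contr c (a # u) = cons_poly a (contr c u) + smul c (M a (contr c u))"

lemma contr_cons[simp]: "contr c (a # u) = cons_poly a (contr c u) + smul c (M a (contr c u))"
  by (rule ext) simp
declare contr.simps(2)[simp del]

lemma fin_contr[simp]: "fin (contr c w)" by (induction w) (simp_all only: contr.simps fin_add fin_smul fin_cons fin_M fin_wd)

definition Sg :: "rat \<Rightarrow> ((nat \<times> 'g::ab_group_add) list \<Rightarrow> rat) \<Rightarrow> (nat \<times> 'g) list \<Rightarrow> rat" where
  "Sg c = lin (contr c)"

lemma Sg_wd[simp]: "Sg c (wd x) = contr c x" by (simp add: Sg_def)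
lemma Sg_zero[simp]: "Sg c 0 = 0" by (simp add: Sg_def)
lemma fin_Sg[simp]: "fin P \<Longrightarrow> fin (Sg c P)" by (simp add: Sg_def)
lemma lmap_Sg[intro]: "lmap F \<Longrightarrow> fmap F \<Longrightarrow> lmap (\<lambda>P. Sg c (F P))"
  unfolding Sg_def by (rule lmap_linF)
lemma fmap_Sg[intro]: "fmap F \<Longrightarrow> fmap (\<lambda>P. Sg c (F P))" by (simp add: fmap_def)
lemma Sg_add[simp]: "fin P \<Longrightarrow> fin Q \<Longrightarrow> Sg c (P + Q) = Sg c P + Sg c Q" by (simp add: Sg_def lin_add)
lemma Sg_diff[simp]: "fin P \<Longrightarrow> fin Q \<Longrightarrow> Sg c (P - Q) = Sg c P - Sg c Q" by (simp add: Sg_def lin_diff)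
lemma Sg_uminus[simp]: "Sg c (- P) = - Sg c P" by (simp add: Sg_def lin_uminus)
lemma Sg_smul[simp]: "fin P \<Longrightarrow> Sg c (smul d P) = smul d (Sg c P)" by (simp add: Sg_def lin_smul)

lemmas lmap_rules = lmap_add lmap_diff lmap_uminus lmap_cons lmap_M lmap_smul lmap_Sg lmap_blF1 lmap_blF2 lmap_linF lmap_id
lemmas fmap_rules = fmap_add fmap_diff fmap_uminus fmap_cons fmap_M fmap_smul fmap_Sg fmap_blF1 fmap_blF2 fmap_linF fmap_id

lemma Sg_cons: "fin P \<Longrightarrow> Sg c (cons_poly a P) = cons_poly a (Sg c P) + smul c (M a (Sg c P))"
  by (rule lmap_eq[where F="\<lambda>P. Sg c (cons_poly a P)" and G="\<lambda>P. cons_poly a (Sg c P) + smul c (M a (Sg c P))"]) (intro lmap_rules fmap_rules | simp)+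

lemma Sg_M: "fin P \<Longrightarrow> Sg c (M a P) = M a (Sg c P)"
proof (rule lmap_eq[where F="\<lambda>P. Sg c (M a P)" and G="\<lambda>P. M a (Sg c P)"])
  fix x show "Sg c (M a (wd x)) = M a (Sg c (wd x))"
    by (cases x) (auto simp: M_cons M_M)
qed (intro lmap_rules fmap_rules | simp)+

lemma Sg_contr_inv: "Sg c (contr (-c) w) = wd w"
proof (induction w)
  case (Cons a u)
  have "Sg c (contr (-c) (a # u)) = cons_poly a (wd u) + smul c (M a (wd u)) + smul (-c) (M a (wd u))"
    by (simp add: Sg_cons Sg_M Cons)
  also have "\<dots> = wd (a # u)" by (rule ext) (simp add: algebra_simps)
  finally show ?case .
qed simp

lemma lmap_Sg0: "lmap (Sg c)" by (simp add: Sg_def lmap_lin)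
lemma Sg_Sg: "fin P \<Longrightarrow> Sg c (Sg (-c) P) = P"
proof -
  assume P: "fin P"
  have "Sg c (Sg (-c) P) = Sg c (lin (contr (-c)) P)" by (simp add: Sg_def)
  also have "\<dots> = lin (\<lambda>u. Sg c (contr (-c) u)) P" by (rule lmap_lin_F[OF lmap_Sg0 P]) simp
  also have "\<dots> = P" by (simp add: Sg_contr_inv lin_id P)
  finally show ?thesis .
qed

abbreviation "Z1 \<equiv> bl (zprod 1)"
abbreviation "Zm \<equiv> bl (zprod (-1))"
abbreviation "D1 \<equiv> bl (zdot 1)"
abbreviation "Dm \<equiv> bl (zdot (-1))"

lemma core_words:
  "Z1 (cons_poly a (wd x) + M a (wd x)) (cons_poly b (wd y) + M b (wd y)) =
   cons_poly a (Z1 (wd x) (cons_poly b (wd y) + M b (wd y))) + M a (Z1 (wd x) (cons_poly b (wd y) + M b (wd y)))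
   + cons_poly b (Z1 (cons_poly a (wd x) + M a (wd x)) (wd y)) + M b (Z1 (cons_poly a (wd x) + M a (wd x)) (wd y))
   - cons_poly (zadd a b) (Z1 (wd x) (wd y)) - M (zadd a b) (Z1 (wd x) (wd y))"
  apply (cases x; cases y)
     apply (simp_all add: zprod_cons M_cons zadd_ac algebra_simps)
  done




lemma core:
  assumes "fin P" "fin Q"
  shows "Z1 (cons_poly a P + M a P) (cons_poly b Q + M b Q) =
   cons_poly a (Z1 P (cons_poly b Q + M b Q)) + M a (Z1 P (cons_poly b Q + M b Q))
   + cons_poly b (Z1 (cons_poly a P + M a P) Q) + M b (Z1 (cons_poly a P + M a P) Q)
   - cons_poly (zadd a b) (Z1 P Q) - M (zadd a b) (Z1 P Q)"
  apply (rule bil_unique[where F="\<lambda>P Q. Z1 (cons_poly a P + M a P) (cons_poly b Q + M b Q)"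
      and G="\<lambda>P Q. cons_poly a (Z1 P (cons_poly b Q + M b Q)) + M a (Z1 P (cons_poly b Q + M b Q))
   + cons_poly b (Z1 (cons_poly a P + M a P) Q) + M b (Z1 (cons_poly a P + M a P) Q)
   - cons_poly (zadd a b) (Z1 P Q) - M (zadd a b) (Z1 P Q)"])
  subgoal by (intro lmap_rules fmap_rules | simp)+
  subgoal by (intro lmap_rules fmap_rules | simp)+
  subgoal by (intro lmap_rules fmap_rules | simp)+
  subgoal by (intro lmap_rules fmap_rules | simp)+
  subgoal by (rule core_words)
  by (simp_all add: assms)

lemma main_words: "Sg 1 (zprod (-1) w v) = Z1 (contr 1 w) (contr 1 v)"
proof (induction "-1::rat" w v rule: zprod.induct)
  case (1 v)
  then show ?case by (simp add: bl_def lin_id)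
next
  case (2 k s w)
  then show ?case by (simp add: bl_def lin_id del: contr_cons)
next
  case (3 k s w l t v)
  let ?a = "(k, s)" and ?b = "(l, t)"
  have "Sg 1 (zprod (-1) (?a # w) (?b # v)) =
    Sg 1 (cons_poly ?a (zprod (-1) w (?b # v))) + Sg 1 (cons_poly ?b (zprod (-1) (?a # w) v))
    - Sg 1 (cons_poly (zadd ?a ?b) (zprod (-1) w v))"
    by (simp only: zprod_cons smul_mone) (simp add: diff_conv_add_uminus[symmetric])
  also have "\<dots> = Z1 (contr 1 (?a # w)) (contr 1 (?b # v))"
    using 3 by (simp only: Sg_cons fin_zprod smul_one contr_cons core fin_contr) (simp add: algebra_simps)
  finally show ?case .
qed

lemma main_poly:
  assumes "fin P" "fin Q"
  shows "Sg 1 (Zm P Q) = Z1 (Sg 1 P) (Sg 1 Q)"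
  apply (rule bil_unique[where F="\<lambda>P Q. Sg 1 (Zm P Q)" and G="\<lambda>P Q. Z1 (Sg 1 P) (Sg 1 Q)"])
  subgoal by (intro lmap_rules fmap_rules | simp)+
  subgoal by (intro lmap_rules fmap_rules | simp)+
  subgoal by (intro lmap_rules fmap_rules | simp)+
  subgoal by (intro lmap_rules fmap_rules | simp)+
  subgoal by (simp add: main_words)
  by (simp_all add: assms)

lemma dcore_words:
  "D1 (cons_poly a (wd x) + M a (wd x)) (cons_poly b (wd y) + M b (wd y)) =
   cons_poly (zadd a b) (Z1 (wd x) (wd y)) + M (zadd a b) (Z1 (wd x) (wd y))"
  by (cases x; cases y) (simp_all add: zprod_cons zdot_cons M_cons zadd_ac algebra_simps)

lemma dcore:
  assumes "fin P" "fin Q"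
  shows "D1 (cons_poly a P + M a P) (cons_poly b Q + M b Q) =
   cons_poly (zadd a b) (Z1 P Q) + M (zadd a b) (Z1 P Q)"
  apply (rule bil_unique[where F="\<lambda>P Q. D1 (cons_poly a P + M a P) (cons_poly b Q + M b Q)"
      and G="\<lambda>P Q. cons_poly (zadd a b) (Z1 P Q) + M (zadd a b) (Z1 P Q)"])
  subgoal by (intro lmap_rules fmap_rules | simp)+
  subgoal by (intro lmap_rules fmap_rules | simp)+
  subgoal by (intro lmap_rules fmap_rules | simp)+
  subgoal by (intro lmap_rules fmap_rules | simp)+
  subgoal by (rule dcore_words)
  by (simp_all add: assms)

lemma dmain_words: "Sg 1 (zdot (-1) w v) = D1 (contr 1 w) (contr 1 v)"
proof (cases w)
  case Nil then show ?thesis by (simp add: bl_def lin_id)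
next
  case (Cons a w')
  show ?thesis
  proof (cases v)
    case Nil then show ?thesis using Cons by (simp add: bl_def lin_id del: contr_cons)
  next
    case (Cons b v')
    show ?thesis using \<open>w = a # w'\<close> Cons
      by (simp only: zdot_cons Sg_cons fin_zprod smul_one contr_cons dcore fin_contr main_words)
  qed
qed

lemma dmain_poly:
  assumes "fin P" "fin Q"
  shows "Sg 1 (Dm P Q) = D1 (Sg 1 P) (Sg 1 Q)"
  apply (rule bil_unique[where F="\<lambda>P Q. Sg 1 (Dm P Q)" and G="\<lambda>P Q. D1 (Sg 1 P) (Sg 1 Q)"])
  subgoal by (intro lmap_rules fmap_rules | simp)+
  subgoal by (intro lmap_rules fmap_rules | simp)+
  subgoal by (intro lmap_rules fmap_rules | simp)+
  subgoal by (intro lmap_rules fmap_rules | simp)+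
  subgoal by (simp add: dmain_words)
  by (simp_all add: assms)




definition valid :: "(nat \<times> 'g) list \<Rightarrow> bool" where
  "valid z \<longleftrightarrow> (\<forall>p\<in>set z. 1 \<le> fst p)"

definition cnd :: "'g letter list \<Rightarrow> bool" where
  "cnd u \<longleftrightarrow> u = [] \<or> (\<exists>s. last u = Y s)"

lemma valid_simps[simp]: "valid []" "valid ((k, s) # z) \<longleftrightarrow> 1 \<le> k \<and> valid z"
  by (auto simp: valid_def)

lemma toW_simps[simp]: "toW [] = []" "toW ((k, s) # z) = replicate (k - 1) X @ Y s # toW z"
  by (auto simp: toW_def)

lemma parse_rep: "parse k (replicate m X @ u) = parse (k + m) u"
  by (induction m arbitrary: k) auto

lemma parse_toW: "valid z \<Longrightarrow> parse 1 (toW z) = z"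
  by (induction z) (auto simp: parse_rep)

lemma parse_toW'[simp]: "valid z \<Longrightarrow> parse (Suc 0) (toW z) = z"
  using parse_toW by simp

lemma toW_parse_gen: "1 \<le> k \<Longrightarrow> (u = [] \<and> k = 1) \<or> (u \<noteq> [] \<and> (\<exists>s. last u = Y s)) \<Longrightarrow> toW (parse k u) = replicate (k - 1) X @ u"
proof (induction u arbitrary: k)
  case Nil then show ?case by simp
next
  case (Cons a u)
  show ?case
  proof (cases a)
    case X
    then have "u \<noteq> []" using Cons.prems by auto
    then have "u \<noteq> [] \<and> (\<exists>s. last u = Y s)" using Cons.prems X by auto
    then have "toW (parse (Suc k) u) = replicate k X @ u" using Cons.IH[of "Suc k"] by simp
    moreover have "replicate k X @ u = replicate (k - 1) X @ X # u"
      using Cons.prems by (cases k) (auto simp: replicate_app_Cons_same)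
    ultimately show ?thesis using X by simp
  next
    case (Y s)
    have "toW (parse 1 u) = u"
    proof (cases "u = []")
      case False then show ?thesis using Cons.prems Y Cons.IH[of 1] by auto
    qed simp
    then show ?thesis using Y by simp
  qed
qed

lemma toW_parse: "cnd u \<Longrightarrow> toW (parse 1 u) = u"
  using toW_parse_gen[of 1 u] by (auto simp: cnd_def)

lemma valid_parse_gen: "1 \<le> k \<Longrightarrow> valid (parse k u)"
  by (induction k u rule: parse.induct) auto

lemma valid_parse: "valid (parse 1 u)" by (simp add: valid_parse_gen)

lemma cnd_toW: "valid z \<Longrightarrow> cnd (toW z)"
proof (induction z)
  case (Cons a z) then show ?case by (cases a) (auto simp: cnd_def)
qed (simp add: cnd_def)

lemma liftZ_alt: "liftZ R = (\<lambda>u. if cnd u then R (parse 1 u) else 0)"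
  by (simp add: liftZ_def cnd_def)

lemma liftZ_lin: "liftZ (lin f R) = lin (\<lambda>z. liftZ (f z)) R"
  by (rule ext) (simp add: liftZ_alt lin_def)

lemma liftZ_add: "liftZ (P + Q) = liftZ P + liftZ Q"
  by (rule ext) (simp add: liftZ_alt)

lemma liftZ_wd: "valid z \<Longrightarrow> liftZ (wd z) = wd (toW z)"
proof (rule ext)
  fix u assume z: "valid z"
  show "liftZ (wd z) u = wd (toW z) u"
  proof (cases "cnd u")
    case True
    have "(parse 1 u = z) = (u = toW z)"
      using True z toW_parse parse_toW by fastforce
    then show ?thesis using True by (simp add: liftZ_alt wd_def)
  next
    case False
    then have "u \<noteq> toW z" using cnd_toW[OF z] by auto
    then show ?thesis using False by (simp add: liftZ_alt wd_def)
  qed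
qed

definition vs :: "((nat \<times> 'g) list \<Rightarrow> rat) \<Rightarrow> bool" where
  "vs R \<longleftrightarrow> (\<forall>z\<in>spt R. valid z)"

lemma liftZ_vs: "fin R \<Longrightarrow> vs R \<Longrightarrow> liftZ R = lin (\<lambda>z. wd (toW z)) R"
proof -
  assume R: "fin R" "vs R"
  have "liftZ R = liftZ (lin wd R)" using R by (simp add: lin_id)
  also have "\<dots> = lin (\<lambda>z. liftZ (wd z)) R" by (rule liftZ_lin)
  also have "\<dots> = lin (\<lambda>z. wd (toW z)) R"
    using R by (intro lin_cong) (simp add: vs_def liftZ_wd)
  finally show ?thesis .
qed

definition ZP :: "('g letter list \<Rightarrow> rat) \<Rightarrow> (nat \<times> 'g) list \<Rightarrow> rat" where
  "ZP P = (\<lambda>z. if valid z then P (toW z) else 0)"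

lemma ZP_fin: "P \<in> A1 \<Longrightarrow> fin (ZP P)"
proof -
  assume "P \<in> A1"
  then have "finite {u. P u \<noteq> 0}" by (simp add: A1_def)
  moreover have "spt (ZP P) \<subseteq> parse 1 ` {u. P u \<noteq> 0}"
  proof
    fix z assume "z \<in> spt (ZP P)"
    then have "valid z" "P (toW z) \<noteq> 0" by (auto simp: spt_def ZP_def split: if_splits)
    then show "z \<in> parse 1 ` {u. P u \<noteq> 0}" using parse_toW[of z] by force
  qed
  ultimately show ?thesis by (meson finite_imageI finite_subset)
qed

lemma ZP_vs: "vs (ZP P)" by (auto simp: vs_def spt_def ZP_def split: if_splits)

lemma A1_cnd: "P \<in> A1 \<Longrightarrow> P u \<noteq> 0 \<Longrightarrow> cnd u"
  by (auto simp: A1_def cnd_def)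

lemma liftZ_ZP: "P \<in> A1 \<Longrightarrow> liftZ (ZP P) = P"
proof (rule ext)
  fix u assume P: "P \<in> A1"
  show "liftZ (ZP P) u = P u"
  proof (cases "cnd u")
    case True
    then show ?thesis using valid_parse[of u] toW_parse[OF True] by (simp add: liftZ_alt ZP_def)
  next
    case False
    then show ?thesis using A1_cnd[OF P, of u] by (auto simp: liftZ_alt)
  qed
qed

lemma A1_lin: "P \<in> A1 \<Longrightarrow> lin F P = lin (\<lambda>z. F (toW z)) (ZP P)"
proof -
  assume P: "P \<in> A1"
  have "lin F P = lin F (lin (\<lambda>z. wd (toW z)) (ZP P))"
    using P by (simp add: liftZ_vs[symmetric] ZP_fin ZP_vs liftZ_ZP)
  also have "\<dots> = lin (\<lambda>z. F (toW z)) (ZP P)"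
    using P by (simp add: lin_comp ZP_fin)
  finally show ?thesis .
qed

lemma ZP_liftZ: "vs R \<Longrightarrow> ZP (liftZ R) = R"
  apply (rule ext)
  apply (simp add: ZP_def liftZ_alt cnd_toW parse_toW)
  by (auto simp: vs_def spt_def)

lemma liftZ_A1: "fin R \<Longrightarrow> liftZ R \<in> A1"
proof -
  assume R: "fin R"
  have "{u. liftZ R u \<noteq> 0} \<subseteq> toW ` spt R"
  proof
    fix u assume "u \<in> {u. liftZ R u \<noteq> 0}"
    then have "cnd u" "R (parse 1 u) \<noteq> 0" by (auto simp: liftZ_alt split: if_splits)
    then show "u \<in> toW ` spt R" using toW_parse[of u] by (force simp: spt_def)
  qed
  then have "finite {u. liftZ R u \<noteq> 0}" using R by (meson finite_imageI finite_subset)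
  moreover have "\<forall>u. liftZ R u \<noteq> 0 \<longrightarrow> u = [] \<or> (\<exists>s. last u = Y s)"
    by (auto simp: liftZ_def)
  ultimately show ?thesis by (simp add: A1_def)
qed

lemma bil_lin: "bil f P Q = lin (\<lambda>u. lin (f u) Q) P"
  by (rule ext) (simp add: bil_def lin_def sum_distrib_left mult.assoc)

lemma prod_conv:
  assumes P: "P \<in> A1" and Q: "Q \<in> A1"
  shows "bil (\<lambda>u v. liftZ (f (parse 1 u) (parse 1 v))) P Q = liftZ (bl f (ZP P) (ZP Q))"
proof -
  have "bil (\<lambda>u v. liftZ (f (parse 1 u) (parse 1 v))) P Q
      = lin (\<lambda>z. lin (\<lambda>v. liftZ (f (parse 1 (toW z)) (parse 1 v))) Q) (ZP P)"
    by (simp add: bil_lin A1_lin[OF P])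
  also have "\<dots> = lin (\<lambda>z. lin (\<lambda>v. liftZ (f z (parse 1 v))) Q) (ZP P)"
    by (rule lin_cong) (use ZP_vs[of P] in \<open>auto simp: vs_def\<close>)
  also have "\<dots> = lin (\<lambda>z. lin (\<lambda>z'. liftZ (f z (parse 1 (toW z')))) (ZP Q)) (ZP P)"
    by (simp add: A1_lin[OF Q])
  also have "\<dots> = lin (\<lambda>z. lin (\<lambda>z'. liftZ (f z z')) (ZP Q)) (ZP P)"
    by (rule lin_cong, rule lin_cong) (use ZP_vs[of Q] in \<open>auto simp: vs_def\<close>)
  also have "\<dots> = liftZ (bl f (ZP P) (ZP Q))"
    by (simp add: bl_def liftZ_lin)
  finally show ?thesis .
qed




lemma valid_Iz[simp]: "valid (Iz_aux p z) = valid z"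
  by (induction p z rule: Iz_aux.induct) auto
lemma valid_Iinvz[simp]: "valid (Iinvz_aux p z) = valid z"
  by (induction p z rule: Iinvz_aux.induct) auto

fun Dz :: "(nat \<times> 'g::ab_group_add) list \<Rightarrow> (nat \<times> 'g) list \<Rightarrow> rat" where
  "Dz [] = wd []"
| "Dz (a # v) = cons_poly a (Dz v) + M (fst a, 0) (Dz v)"

lemma Dz_cons[simp]: "Dz (a # v) = cons_poly a (Dz v) + M (fst a, 0) (Dz v)"
  by (rule ext) simp
declare Dz.simps(2)[simp del]

lemma fin_Dz[simp]: "fin (Dz v)"
  by (induction v) (simp_all only: Dz_cons Dz.simps(1) fin_add fin_cons fin_M fin_wd)

lemma spt_cons: "spt (cons_poly a P) \<subseteq> (\<lambda>z. a # z) ` spt P"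
proof
  fix z assume "z \<in> spt (cons_poly a P)"
  then obtain b y where "z = b # y" "b = a" "P y \<noteq> 0"
    by (cases z) (auto simp: spt_def cons_poly_def split: if_splits)
  then show "z \<in> (\<lambda>z. a # z) ` spt P" by (auto simp: spt_def)
qed

lemma spt_M: "spt (M a P) \<subseteq> {zadd a b # x | b x. b # x \<in> spt P}"
proof
  fix z assume "z \<in> spt (M a P)"
  then obtain u where u: "u \<in> spt P" "z \<in> spt (mw a u)" using spt_lin[of "mw a" P] by (auto simp: M_def)
  then obtain b x where "u = b # x" by (cases u) (auto simp: spt_def)
  then have "z = zadd a b # x" "b # x \<in> spt P" using u by (auto simp: spt_def wd_def split: if_splits)
  then show "z \<in> {zadd a b # x | b x. b # x \<in> spt P}" by blast
qed

definition gd :: "((nat \<times> 'g) list \<Rightarrow> rat) \<Rightarrow> bool" where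
  "gd R \<longleftrightarrow> (\<forall>z\<in>spt R. valid z \<and> z \<noteq> [])"

lemma gd_add: "gd P \<Longrightarrow> gd Q \<Longrightarrow> gd (P + Q)"
  using spt_add by (fastforce simp: gd_def)
lemma vs_add: "vs P \<Longrightarrow> vs Q \<Longrightarrow> vs (P + Q)"
  using spt_add by (fastforce simp: vs_def)
lemma gd_cons: "vs P \<Longrightarrow> 1 \<le> fst a \<Longrightarrow> gd (cons_poly a P)"
  using spt_cons[of a P] by (cases a) (fastforce simp: gd_def vs_def)
lemma gd_M: "gd P \<Longrightarrow> gd (M a P)"
proof -
  assume P: "gd P"
  show ?thesis unfolding gd_def
  proof
    fix z assume "z \<in> spt (M a P)"
    then obtain b x where z: "z = zadd a b # x" "b # x \<in> spt P" using spt_M by blast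
    then have "valid (b # x)" using P by (auto simp: gd_def)
    then show "valid z \<and> z \<noteq> []" using z by (cases b) (auto simp: zadd_def valid_def)
  qed
qed
lemma gd_vs: "gd P \<Longrightarrow> vs P" by (simp add: gd_def vs_def)

lemma Dz_gd: "valid v \<Longrightarrow> v \<noteq> [] \<Longrightarrow> gd (Dz v)"
proof (induction v)
  case (Cons a v)
  obtain k q where a: "a = (k, q)" by (cases a)
  have vs: "vs (Dz v)"
  proof (cases "v = []")
    case True then show ?thesis by (simp add: vs_def)
  next
    case False then show ?thesis using Cons a by (simp add: gd_vs)
  qed
  have gM: "gd (M (k, 0) (Dz v))"
  proof (cases "v = []")
    case True then show ?thesis by (simp add: gd_def spt_def)
  next
    case False then show ?thesis using Cons a by (simp add: gd_M)
  qed
  have e: "Dz (a # v) = cons_poly (k, q) (Dz v) + M (k, 0) (Dz v)" by (simp only: Dz_cons a fst_conv)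
  have "1 \<le> k" using Cons.prems a by simp
  then show ?case unfolding e using vs gM by (intro gd_add gd_cons) auto
qed simp

lemma Dz_vs: "valid v \<Longrightarrow> vs (Dz v)"
  by (cases "v = []") (auto simp: vs_def intro: Dz_gd[THEN gd_vs, unfolded vs_def, rule_format])

definition Jm :: "'g::ab_group_add \<Rightarrow> ((nat \<times> 'g) list \<Rightarrow> rat) \<Rightarrow> (nat \<times> 'g) list \<Rightarrow> rat" where
  "Jm p = lin (\<lambda>z. wd (Iinvz_aux p z))"

lemma lmap_Jm0[intro]: "lmap (Jm p)" by (simp add: Jm_def lmap_lin)
lemma fin_Jm[simp]: "fin P \<Longrightarrow> fin (Jm p P)" by (simp add: Jm_def)
lemma fmap_Jm0[intro]: "fmap (Jm p)" by (simp add: fmap_def)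
lemma Jm_add[simp]: "fin P \<Longrightarrow> fin Q \<Longrightarrow> Jm p (P + Q) = Jm p P + Jm p Q" by (simp add: Jm_def lin_add)

lemma Jm_cons: "fin D \<Longrightarrow> Jm p (cons_poly (k, q) D) = cons_poly (k, q - p) (Jm q D)"
proof (rule lmap_eq[where F="\<lambda>D. Jm p (cons_poly (k, q) D)" and G="\<lambda>D. cons_poly (k, q - p) (Jm q D)"])
  show "lmap (\<lambda>D. Jm p (cons_poly (k, q) D))" by (rule lmap_comp) auto
  show "lmap (\<lambda>D. cons_poly (k, q - p) (Jm q D))" by (rule lmap_comp) auto
  fix x show "Jm p (cons_poly (k, q) (wd x)) = cons_poly (k, q - p) (Jm q (wd x))"
    by (simp add: Jm_def)
qed

lemma Jm_M: "fin D \<Longrightarrow> Jm p (M (k, 0) D) = M (k, q - p) (Jm q D)"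
proof (rule lmap_eq[where F="\<lambda>D. Jm p (M (k, 0) D)" and G="\<lambda>D. M (k, q - p) (Jm q D)"])
  show "lmap (\<lambda>D. Jm p (M (k, 0) D))" by (rule lmap_comp) auto
  show "lmap (\<lambda>D. M (k, q - p) (Jm q D))" by (rule lmap_comp) auto
  fix x show "Jm p (M (k, 0) (wd x)) = M (k, q - p) (Jm q (wd x))"
  proof (cases x)
    case Nil then show ?thesis by (simp add: Jm_def)
  next
    case (Cons b y)
    then show ?thesis by (cases b) (simp add: Jm_def zadd_def)
  qed
qed

lemma J_main: "Jm p (Dz (Iz_aux p z)) = contr 1 z"
proof (induction z arbitrary: p)
  case Nil then show ?case by (simp add: Jm_def)
next
  case (Cons a u)
  obtain k s where a: "a = (k, s)" by (cases a)
  have "Jm p (Dz (Iz_aux p (a # u))) =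
      Jm p (cons_poly (k, p + s) (Dz (Iz_aux (p + s) u)) + M (k, 0) (Dz (Iz_aux (p + s) u)))"
    by (simp add: a)
  also have "\<dots> = cons_poly (k, s) (Jm (p + s) (Dz (Iz_aux (p + s) u)))
       + M (k, s) (Jm (p + s) (Dz (Iz_aux (p + s) u)))"
    by (simp add: Jm_cons Jm_M[where q="p + s"])
  also have "\<dots> = contr 1 (a # u)" by (simp add: Cons a)
  finally show ?case .
qed




lemma gamma_Y: "gamma (Y q # u) = cons_poly X (gamma u) + cons_poly (Y q) (gamma u)"
  by (rule ext) simp
declare gamma.simps(3)[simp del]

lemma snoc_cons: "snoc_poly a (cons_poly b P) = cons_poly b (snoc_poly a P)"
proof (rule ext)
  fix v show "snoc_poly a (cons_poly b P) v = cons_poly b (snoc_poly a P) v"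
  proof (cases v)
    case Nil then show ?thesis by (simp add: snoc_poly_def cons_poly_def)
  next
    case (Cons c v')
    then show ?thesis by (cases "v' = []") (auto simp: snoc_poly_def cons_poly_def)
  qed
qed

lemma snoc_add: "snoc_poly a (P + Q) = snoc_poly a P + snoc_poly a Q"
  by (rule ext) (simp add: snoc_poly_def)

lemma snoc_wd: "snoc_poly a (wd u) = wd (u @ [a])"
  by (rule ext) (auto simp: snoc_poly_def wd_def)

lemma cX_wd: "(cons_poly X ^^ m) (wd u) = wd (replicate m X @ u)"
  by (induction m) auto

lemma gamma_rep: "gamma (replicate m X @ u) = (cons_poly X ^^ m) (gamma u)"
  by (induction m) auto

lemma snoc_cX: "snoc_poly a ((cons_poly X ^^ m) P) = (cons_poly X ^^ m) (snoc_poly a P)"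
  by (induction m) (auto simp: snoc_cons)

lemma cX_add: "(cons_poly X ^^ m) (P + Q) = (cons_poly X ^^ m) P + (cons_poly X ^^ m) Q"
  by (induction m) (simp_all only: funpow.simps comp_apply id_apply cons_add)

lemma fin_snoc[simp]: "fin P \<Longrightarrow> fin (snoc_poly a P)"
proof -
  assume P: "fin P"
  have "spt (snoc_poly a P) \<subseteq> (\<lambda>u. u @ [a]) ` spt P"
  proof
    fix v assume "v \<in> spt (snoc_poly a P)"
    then have "v \<noteq> []" "last v = a" "P (butlast v) \<noteq> 0" by (auto simp: spt_def snoc_poly_def split: if_splits)
    then show "v \<in> (\<lambda>u. u @ [a]) ` spt P"
      by (intro image_eqI[where x="butlast v"]) (auto simp: spt_def)
  qed
  then show ?thesis using P by (meson finite_imageI finite_subset)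
qed

lemma fin_gamma[simp]: "fin (gamma u)"
proof (induction u)
  case (Cons a u) then show ?case by (cases a) (simp_all only: gamma_Y gamma.simps fin_add fin_cons)
qed simp

lemma fin_dsh_word[simp]: "fin (dsh_word u)"
proof (cases "u = []")
  case False
  have z: "fin (\<lambda>_. 0::rat)" by (simp add: spt_def)
  show ?thesis using False z by (cases "last u") (simp_all add: dsh_word_def)
qed (simp add: dsh_word_def)

lemma M_00: "fin R \<Longrightarrow> gd R \<Longrightarrow> M (0, 0) R = R"
proof -
  assume R: "fin R" "gd R"
  have "M (0, 0) R = lin wd R"
    unfolding M_def
  proof (rule lin_cong)
    fix z assume "z \<in> spt R"
    then have "z \<noteq> []" using R by (auto simp: gd_def)
    then show "mw (0, 0) z = wd z" by (cases z) (auto simp: zadd_def)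
  qed
  then show ?thesis using R by (simp add: lin_id)
qed

lemma L_X: "fin R \<Longrightarrow> gd R \<Longrightarrow> cons_poly X (liftZ R) = liftZ (M (1, 0) R)"
proof -
  assume R: "fin R" "gd R"
  have "cons_poly X (liftZ R) = cons_poly X (lin (\<lambda>z. wd (toW z)) R)" using R by (simp add: liftZ_vs gd_vs)
  also have "\<dots> = lin (\<lambda>z. cons_poly X (wd (toW z))) R" by (rule lmap_lin_F) (use R in auto)
  also have "\<dots> = lin (\<lambda>z. lin (\<lambda>z. wd (toW z)) (mw (1, 0) z)) R"
  proof (rule lin_cong)
    fix z assume z: "z \<in> spt R"
    then obtain l t x where zz: "z = (l, t) # x" "1 \<le> l" "valid x" using R
      by (cases z) (auto simp: gd_def)
    obtain l' where "l = Suc l'" using zz by (cases l) auto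
    then show "cons_poly X (wd (toW z)) = lin (\<lambda>z. wd (toW z)) (mw (1, 0) z)"
      using zz by (simp add: zadd_def)
  qed
  also have "\<dots> = lin (\<lambda>z. wd (toW z)) (M (1, 0) R)" by (simp add: M_def lin_comp R)
  also have "\<dots> = liftZ (M (1, 0) R)" using R by (simp add: liftZ_vs gd_vs gd_M)
  finally show ?thesis .
qed

lemma L_Y: "fin R \<Longrightarrow> vs R \<Longrightarrow> cons_poly (Y q) (liftZ R) = liftZ (cons_poly (1, q) R)"
proof -
  assume R: "fin R" "vs R"
  have "cons_poly (Y q) (liftZ R) = cons_poly (Y q) (lin (\<lambda>z. wd (toW z)) R)" using R by (simp add: liftZ_vs)
  also have "\<dots> = lin (\<lambda>z. cons_poly (Y q) (wd (toW z))) R" by (rule lmap_lin_F) (use R in auto)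
  also have "\<dots> = lin (\<lambda>z. wd (toW z)) (cons_poly (1, q) R)"
    using R by (simp add: cons_lin lin_comp)
  also have "\<dots> = liftZ (cons_poly (1, q) R)" using R by (simp add: liftZ_vs gd_vs gd_cons)
  finally show ?thesis .
qed

lemma L_cX: "fin R \<Longrightarrow> gd R \<Longrightarrow> (cons_poly X ^^ m) (liftZ R) = liftZ (M (m, 0) R)"
proof (induction m)
  case 0 then show ?case by (simp add: M_00)
next
  case (Suc m)
  have "(cons_poly X ^^ Suc m) (liftZ R) = cons_poly X (liftZ (M (m, 0) R))" using Suc by simp
  also have "\<dots> = liftZ (M (1, 0) (M (m, 0) R))" using Suc.prems by (simp add: L_X gd_M)
  also have "\<dots> = liftZ (M (Suc m, 0) R)" using Suc.prems by (simp add: M_M zadd_def)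
  finally show ?case .
qed




lemma toW_ne: "v \<noteq> [] \<Longrightarrow> toW v \<noteq> []"
  by (cases v) auto

lemma last_toW: "valid v \<Longrightarrow> v \<noteq> [] \<Longrightarrow> \<exists>t. last (toW v) = Y t"
  using cnd_toW[of v] toW_ne[of v] by (auto simp: cnd_def)

lemma D_lemma: "valid v \<Longrightarrow> dsh_word (toW v) = liftZ (Dz v)"
proof (induction v)
  case Nil then show ?case by (simp add: dsh_word_def liftZ_wd)
next
  case (Cons a v')
  obtain k q where a: "a = (k, q)" by (cases a)
  have k: "1 \<le> k" and v': "valid v'" using Cons.prems a by auto
  show ?case
  proof (cases "v' = []")
    case True
    have "dsh_word (toW (a # v')) = snoc_poly (Y q) (gamma (replicate (k - 1) X))"
      using True a by (simp add: dsh_word_def butlast_append)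
    also have "\<dots> = wd (replicate (k - 1) X @ [Y q])"
    proof -
      have g: "gamma (replicate (k - 1) X) = wd (replicate (k - 1) X)"
        using gamma_rep[of "k - 1" "[]"] by (simp add: cX_wd)
      show ?thesis by (simp only: g snoc_wd)
    qed
    also have "\<dots> = liftZ (Dz (a # v'))"
      using True a k by (simp add: liftZ_wd)
    finally show ?thesis .
  next
    case False
    obtain t where t: "last (toW v') = Y t" using last_toW[OF v' False] by blast
    have ne: "toW v' \<noteq> []" using toW_ne[OF False] .
    define D where "D = Dz v'"
    have gD: "gd D" "fin D" using Dz_gd[OF v' False] by (simp_all add: D_def)
    have L: "snoc_poly (Y t) (gamma (butlast (toW v'))) = liftZ D"
      using Cons.IH[OF v'] ne t by (simp add: dsh_word_def D_def)
    have "dsh_word (toW (a # v')) = snoc_poly (Y t) (gamma (replicate (k - 1) X @ Y q # butlast (toW v')))"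
      using a ne t by (simp add: dsh_word_def butlast_append)
    also have "\<dots> = (cons_poly X ^^ (k - 1)) (cons_poly X (liftZ D) + cons_poly (Y q) (liftZ D))"
      by (simp add: gamma_rep gamma_Y snoc_cX snoc_add snoc_cons L)
    also have "\<dots> = (cons_poly X ^^ (k - 1)) (liftZ (M (1, 0) D + cons_poly (1, q) D))"
      using gD by (simp add: L_X L_Y gd_vs liftZ_add)
    also have "\<dots> = liftZ (M (k - 1, 0) (M (1, 0) D + cons_poly (1, q) D))"
      using gD by (intro L_cX) (simp_all add: gd_add gd_M gd_cons gd_vs)
    also have "\<dots> = liftZ (M (k, 0) D + cons_poly (k, q) D)"
      using gD k by (simp add: M_M M_cons zadd_def)
    also have "\<dots> = liftZ (Dz (a # v'))"
      by (simp add: a D_def add.commute)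
    finally show ?thesis .
  qed
qed

lemma Iinv_liftZ: "fin R \<Longrightarrow> vs R \<Longrightarrow> Iinv (liftZ R) = liftZ (Jm 0 R)"
proof -
  assume R: "fin R" "vs R"
  have "Iinv (liftZ R) = Iinv (lin (\<lambda>z. wd (toW z)) R)" using R by (simp add: liftZ_vs)
  also have "\<dots> = lin (\<lambda>z. Iinv (wd (toW z))) R"
    unfolding Iinv_def by (rule lmap_lin_F) (use R in auto)
  also have "\<dots> = lin (\<lambda>z. liftZ (wd (Iinvz_aux 0 z))) R"
  proof (rule lin_cong)
    fix z assume "z \<in> spt R"
    then have "valid z" using R by (auto simp: vs_def)
    then show "Iinv (wd (toW z)) = liftZ (wd (Iinvz_aux 0 z))"
      by (simp add: Iinv_def liftZ_wd)
  qed
  also have "\<dots> = liftZ (Jm 0 R)" by (simp add: Jm_def liftZ_lin)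
  finally show ?thesis .
qed

lemma KW: "valid z \<Longrightarrow> Iinv (dsh_word (toW (Iz_aux 0 z))) = liftZ (contr 1 z)"
  by (simp add: D_lemma Iinv_liftZ Dz_vs J_main)

lemma dstar_conv: "P \<in> A1 \<Longrightarrow> dstar P = liftZ (Sg 1 (ZP P))"
proof -
  assume P: "P \<in> A1"
  have vz: "\<And>z. z \<in> spt (ZP P) \<Longrightarrow> valid z" using ZP_vs[of P] by (auto simp: vs_def)
  have "Imap P = lin (\<lambda>z. wd (toW (Iz_aux 0 (parse 1 (toW z))))) (ZP P)"
    unfolding Imap_def by (rule A1_lin[OF P])
  also have "\<dots> = lin (\<lambda>z. wd (toW (Iz_aux 0 z))) (ZP P)"
    by (rule lin_cong) (simp add: vz)
  finally have I: "Imap P = lin (\<lambda>z. wd (toW (Iz_aux 0 z))) (ZP P)" .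
  have "dsh (Imap P) = lin (\<lambda>z. dsh (wd (toW (Iz_aux 0 z)))) (ZP P)"
    unfolding I dsh_def by (rule lmap_lin_F) (use P ZP_fin in auto)
  also have "\<dots> = lin (\<lambda>z. dsh_word (toW (Iz_aux 0 z))) (ZP P)" by (simp add: dsh_def)
  finally have I2: "dsh (Imap P) = lin (\<lambda>z. dsh_word (toW (Iz_aux 0 z))) (ZP P)" .
  have "dstar P = lin (\<lambda>z. Iinv (dsh_word (toW (Iz_aux 0 z)))) (ZP P)"
    unfolding dstar_def I2 Iinv_def by (rule lmap_lin_F) (use P ZP_fin in auto)
  also have "\<dots> = lin (\<lambda>z. liftZ (contr 1 z)) (ZP P)"
    by (rule lin_cong) (simp add: vz KW)
  also have "\<dots> = liftZ (Sg 1 (ZP P))" by (simp add: Sg_def liftZ_lin)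
  finally show ?thesis .
qed




lemma vs_lin: "(\<And>z. z \<in> spt R \<Longrightarrow> vs (f z)) \<Longrightarrow> vs (lin f R)"
  using spt_lin[of f R] by (fastforce simp: vs_def)
lemma vs_cons: "vs P \<Longrightarrow> 1 \<le> fst a \<Longrightarrow> vs (cons_poly a P)"
  by (rule gd_vs, rule gd_cons)
lemma vs_M: "vs P \<Longrightarrow> vs (M a P)"
proof -
  assume P: "vs P"
  show ?thesis unfolding vs_def
  proof
    fix z assume "z \<in> spt (M a P)"
    then obtain b x where z: "z = zadd a b # x" "b # x \<in> spt P" using spt_M by blast
    then have "valid (b # x)" using P by (auto simp: vs_def)
    then show "valid z" using z by (cases b) (auto simp: zadd_def valid_def)
  qed
qed
lemma vs_smul: "vs P \<Longrightarrow> vs (smul c P)"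
  by (auto simp: vs_def spt_def)
lemma vs_wd: "valid z \<Longrightarrow> vs (wd z)" by (simp add: vs_def)

lemma vs_zadd: "1 \<le> fst a \<Longrightarrow> 1 \<le> fst (zadd a b)" by (simp add: zadd_def)

lemma vs_zprod: "valid x \<Longrightarrow> valid y \<Longrightarrow> vs (zprod c x y)"
proof (induction c x y rule: zprod.induct)
  case (1 c v) then show ?case by (simp add: vs_wd)
next
  case (2 c k s w) then show ?case by (simp add: vs_wd)
next
  case (3 c k s w l t v)
  then show ?case
    by (subst zprod_cons) (intro vs_add vs_cons vs_smul; simp add: zadd_def)
qed

lemma vs_zdot: "valid x \<Longrightarrow> valid y \<Longrightarrow> vs (zdot c x y)"
proof (cases x; cases y)
  fix a x' b y' assume "valid x" "valid y" "x = a # x'" "y = b # y'"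
  then show ?thesis by (cases a; cases b) (simp add: zdot_cons vs_cons vs_zprod zadd_def)
qed (auto simp: vs_wd)

lemma vs_bl: "vs A \<Longrightarrow> vs B \<Longrightarrow> (\<And>x y. valid x \<Longrightarrow> valid y \<Longrightarrow> vs (f x y)) \<Longrightarrow> vs (bl f A B)"
proof -
  assume A: "vs A" and B: "vs B" and H: "\<And>x y. valid x \<Longrightarrow> valid y \<Longrightarrow> vs (f x y)"
  show ?thesis unfolding bl_def
  proof (rule vs_lin)
    fix x assume x: "x \<in> spt A"
    show "vs (lin (f x) B)"
    proof (rule vs_lin)
      fix y assume "y \<in> spt B"
      then have "valid x" "valid y" using A B x by (auto simp: vs_def)
      then show "vs (f x y)" by (rule H)
    qed
  qed
qed

lemma vs_contr: "valid z \<Longrightarrow> vs (contr c z)"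
proof (induction z)
  case (Cons a u)
  obtain k s where a: "a = (k, s)" by (cases a)
  have h: "valid u" "1 \<le> fst a" using Cons.prems a by auto
  show ?case by (simp only: contr_cons) (intro vs_add vs_cons vs_smul vs_M Cons.IH h)
qed (simp add: vs_wd)

lemma vs_Sg: "vs R \<Longrightarrow> vs (Sg c R)"
  unfolding Sg_def by (intro vs_lin vs_contr) (auto simp: vs_def)

lemma dstar_A1: "P \<in> A1 \<Longrightarrow> dstar P \<in> A1"
  by (simp add: dstar_conv liftZ_A1 ZP_fin)

lemma ZP_dstar: "P \<in> A1 \<Longrightarrow> ZP (dstar P) = Sg 1 (ZP P)"
  by (simp add: dstar_conv ZP_liftZ vs_Sg ZP_vs)

lemma dstar_inj: "inj_on dstar A1"
proof (rule inj_onI)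
  fix P Q assume P: "P \<in> A1" and Q: "Q \<in> A1" and e: "dstar P = dstar Q"
  have "Sg 1 (ZP P) = Sg 1 (ZP Q)" using ZP_dstar[OF P] ZP_dstar[OF Q] e by simp
  then have "Sg (-1) (Sg (- (-1)) (ZP P)) = Sg (-1) (Sg (- (-1)) (ZP Q))" by simp
  then have "ZP P = ZP Q" using Sg_Sg[of "ZP P" "-1"] Sg_Sg[of "ZP Q" "-1"] P Q by (simp add: ZP_fin)
  then show "P = Q" using liftZ_ZP[OF P] liftZ_ZP[OF Q] by metis
qed

lemma dstar_surj: "Q \<in> A1 \<Longrightarrow> Q \<in> dstar ` A1"
proof -
  assume Q: "Q \<in> A1"
  define P where "P = liftZ (Sg (-1) (ZP Q))"
  have P: "P \<in> A1" unfolding P_def using Q by (simp add: liftZ_A1 ZP_fin)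
  have "dstar P = liftZ (Sg 1 (Sg (-1) (ZP Q)))"
    using P by (simp add: dstar_conv P_def ZP_liftZ vs_Sg ZP_vs)
  also have "\<dots> = Q" using Sg_Sg[of "ZP Q" 1] Q by (simp add: ZP_fin liftZ_ZP)
  finally show ?thesis using P by blast
qed

lemma dinv1: "w \<in> A1 \<Longrightarrow> dstar_inv w \<in> A1"
  unfolding dstar_inv_def by (rule inv_into_into[OF dstar_surj])
lemma dinv2: "w \<in> A1 \<Longrightarrow> dstar (dstar_inv w) = w"
  unfolding dstar_inv_def by (rule f_inv_into_f[OF dstar_surj])
lemma dinv3: "P \<in> A1 \<Longrightarrow> dstar_inv (dstar P) = P"
  unfolding dstar_inv_def by (rule inv_into_f_f[OF dstar_inj])

lemma conv_st: "P \<in> A1 \<Longrightarrow> Q \<in> A1 \<Longrightarrow> stuffle P Q = liftZ (Z1 (ZP P) (ZP Q))"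
  unfolding stuffle_def by (rule prod_conv)
lemma conv_stb: "P \<in> A1 \<Longrightarrow> Q \<in> A1 \<Longrightarrow> stuffle_bar P Q = liftZ (Zm (ZP P) (ZP Q))"
  unfolding stuffle_bar_def by (rule prod_conv)
lemma conv_sd: "P \<in> A1 \<Longrightarrow> Q \<in> A1 \<Longrightarrow> stuffle_dot P Q = liftZ (D1 (ZP P) (ZP Q))"
  unfolding stuffle_dot_def by (rule prod_conv)
lemma conv_sbd: "P \<in> A1 \<Longrightarrow> Q \<in> A1 \<Longrightarrow> stuffle_bar_dot P Q = liftZ (Dm (ZP P) (ZP Q))"
  unfolding stuffle_bar_dot_def by (rule prod_conv)

lemma part1: "P \<in> A1 \<Longrightarrow> Q \<in> A1 \<Longrightarrow> dstar (stuffle_bar P Q) = stuffle (dstar P) (dstar Q)"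
proof -
  assume P: "P \<in> A1" and Q: "Q \<in> A1"
  have v: "vs (Zm (ZP P) (ZP Q))" by (intro vs_bl ZP_vs vs_zprod)
  have f: "fin (Zm (ZP P) (ZP Q))" using P Q by (simp add: ZP_fin)
  have "dstar (stuffle_bar P Q) = liftZ (Sg 1 (Zm (ZP P) (ZP Q)))"
    using P Q f v by (simp add: conv_stb dstar_conv liftZ_A1 ZP_liftZ)
  also have "\<dots> = liftZ (Z1 (Sg 1 (ZP P)) (Sg 1 (ZP Q)))" using P Q by (simp add: main_poly ZP_fin)
  also have "\<dots> = stuffle (dstar P) (dstar Q)"
    using P Q by (simp add: conv_st dstar_A1 ZP_dstar)
  finally show ?thesis .
qed

lemma part2: "P \<in> A1 \<Longrightarrow> Q \<in> A1 \<Longrightarrow> dstar (stuffle_bar_dot P Q) = stuffle_dot (dstar P) (dstar Q)"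
proof -
  assume P: "P \<in> A1" and Q: "Q \<in> A1"
  have v: "vs (Dm (ZP P) (ZP Q))" by (intro vs_bl ZP_vs vs_zdot)
  have f: "fin (Dm (ZP P) (ZP Q))" using P Q by (simp add: ZP_fin)
  have "dstar (stuffle_bar_dot P Q) = liftZ (Sg 1 (Dm (ZP P) (ZP Q)))"
    using P Q f v by (simp add: conv_sbd dstar_conv liftZ_A1 ZP_liftZ)
  also have "\<dots> = liftZ (D1 (Sg 1 (ZP P)) (Sg 1 (ZP Q)))" using P Q by (simp add: dmain_poly ZP_fin)
  also have "\<dots> = stuffle_dot (dstar P) (dstar Q)"
    using P Q by (simp add: conv_sd dstar_A1 ZP_dstar)
  finally show ?thesis .
qed

lemma stb_A1: "P \<in> A1 \<Longrightarrow> Q \<in> A1 \<Longrightarrow> stuffle_bar P Q \<in> A1"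
  by (simp add: conv_stb liftZ_A1 ZP_fin)
lemma sbd_A1: "P \<in> A1 \<Longrightarrow> Q \<in> A1 \<Longrightarrow> stuffle_bar_dot P Q \<in> A1"
  by (simp add: conv_sbd liftZ_A1 ZP_fin)

theorem lemma3p12:
  fixes w w' :: "('g::ab_group_add) poly"
  assumes "w \<in> A1" and "w' \<in> A1"
  shows "dstar (stuffle_bar w w') = stuffle (dstar w) (dstar w') \<and>
         dstar_inv (stuffle w w') = stuffle_bar (dstar_inv w) (dstar_inv w') \<and>
         dstar (stuffle_bar_dot w w') = stuffle_dot (dstar w) (dstar w') \<and>
         dstar_inv (stuffle_dot w w') = stuffle_bar_dot (dstar_inv w) (dstar_inv w')"
proof (intro conjI)
  let ?a = "dstar_inv w" and ?b = "dstar_inv w'"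
  have a: "?a \<in> A1" "dstar ?a = w" using assms by (simp_all add: dinv1 dinv2)
  have b: "?b \<in> A1" "dstar ?b = w'" using assms by (simp_all add: dinv1 dinv2)
  show "dstar (stuffle_bar w w') = stuffle (dstar w) (dstar w')" using assms by (rule part1)
  show "dstar (stuffle_bar_dot w w') = stuffle_dot (dstar w) (dstar w')" using assms by (rule part2)
  have "stuffle w w' = dstar (stuffle_bar ?a ?b)" using part1[OF a(1) b(1)] a b by simp
  then show "dstar_inv (stuffle w w') = stuffle_bar ?a ?b" using a b by (simp add: dinv3 stb_A1)
  have "stuffle_dot w w' = dstar (stuffle_bar_dot ?a ?b)" using part2[OF a(1) b(1)] a b by simp
  then show "dstar_inv (stuffle_dot w w') = stuffle_bar_dot ?a ?b" using a b by (simp add: dinv3 sbd_A1)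
qed


end
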